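(* Let $(X,d)$ be a metric space and let $u, u_1, u_2, \ldots \in F_{USC}(X)$. Then $u_n \stackrel{\Gamma}{\longrightarrow} u$ if and only if for all $\alpha \in (0,1]$, $$\overline{\{u>\alpha\}} \subseteq \liminf_{n\to\infty}[u_n]_\alpha \subseteq \limsup_{n\to\infty}[u_n]_\alpha \subseteq [u]_\alpha .$$
   Context: A fuzzy set on $X$ is a function $u:X\to[0,1]$. Its $\alpha$-cuts are $[u]_\alpha=\{x\in X: u(x)\ge\alpha\}$ for $\alpha\in(0,1]$ and $[u]_0=\overline{\{x: u(x)>0\}}$. $F_{USC}(X)$ is the set of fuzzy sets $u$ on $X$ such that $[u]_\alpha$ is a non-empty closed subset of $X$ for every $\alpha\in[0,1]$. For a sequence of sets $C_n\subseteq X$: $\liminf_{n} C_n=\{x\in X: x=\lim_n x_n,\ x_n\in C_n\}$ and $\limsup_n C_n=\{x\in X: x=\lim_j x_{n_j},\ x_{n_j}\in C_{n_j}\text{ for some subsequence}\}$; $C_n$ Kuratowski converges to $C$ if $C=\liminf_n C_n=\limsup_n C_n$. The endograph of $u$ is ${\rm end}\,u=\{(x,t)\in X\times[0,1]: u(x)\ge t\}$, and $X\times[0,1]$ carries the metric $\overline{d}((x,\alpha),(y,\beta))=d(x,y)+|\alpha-\beta|$. We say $u_n$ $\Gamma$-converges to $u$, written $u_n\stackrel{\Gamma}{\longrightarrow}u$, if ${\rm end}\,u_n$ Kuratowski converges to ${\rm end}\,u$ in $(X\times[0,1],\overline{d})$. *)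

theory Defs
  imports "HOL-Analysis.Analysis"
begin

definition acut :: "('a \<Rightarrow> real) \<Rightarrow> real \<Rightarrow> 'a set" where
  "acut u \<alpha> = {x. u x \<ge> \<alpha>}"

definition zcut :: "('a::topological_space \<Rightarrow> real) \<Rightarrow> 'a set" where
  "zcut u = closure {x. u x > 0}"

definition F_USC :: "('a::metric_space \<Rightarrow> real) \<Rightarrow> bool" where
  "F_USC u \<longleftrightarrow> (\<forall>x. 0 \<le> u x \<and> u x \<le> 1)
     \<and> (\<forall>\<alpha>\<in>{0<..1}. acut u \<alpha> \<noteq> {} \<and> closed (acut u \<alpha>))
     \<and> zcut u \<noteq> {} \<and> closed (zcut u)"

definition K_liminf :: "('b \<Rightarrow> 'b \<Rightarrow> real) \<Rightarrow> (nat \<Rightarrow> 'b set) \<Rightarrow> 'b set" where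
  "K_liminf D C = {x. \<exists>xs. (\<forall>n. xs n \<in> C n) \<and> (\<lambda>n. D (xs n) x) \<longlonglongrightarrow> 0}"

definition K_limsup :: "('b \<Rightarrow> 'b \<Rightarrow> real) \<Rightarrow> (nat \<Rightarrow> 'b set) \<Rightarrow> 'b set" where
  "K_limsup D C = {x. \<exists>r xs. strict_mono (r :: nat \<Rightarrow> nat) \<and> (\<forall>j. xs j \<in> C (r j))
                        \<and> (\<lambda>j. D (xs j) x) \<longlonglongrightarrow> 0}"

definition K_conv :: "('b \<Rightarrow> 'b \<Rightarrow> real) \<Rightarrow> (nat \<Rightarrow> 'b set) \<Rightarrow> 'b set \<Rightarrow> bool" where
  "K_conv D C A \<longleftrightarrow> A = K_liminf D C \<and> A = K_limsup D C"

definition endograph :: "('a \<Rightarrow> real) \<Rightarrow> ('a \<times> real) set" where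
  "endograph u = {(x, t). t \<in> {0..1} \<and> u x \<ge> t}"

definition dbar :: "('a::metric_space \<times> real) \<Rightarrow> ('a \<times> real) \<Rightarrow> real" where
  "dbar p q = dist (fst p) (fst q) + \<bar>snd p - snd q\<bar>"

definition Gamma_conv :: "(nat \<Rightarrow> 'a::metric_space \<Rightarrow> real) \<Rightarrow> ('a \<Rightarrow> real) \<Rightarrow> bool" where
  "Gamma_conv us u \<longleftrightarrow> K_conv dbar (\<lambda>n. endograph (us n)) (endograph u)"

end

theory Submission
  imports Defs
begin

lemma liminf_char:
  "x \<in> K_liminf D C \<longleftrightarrow> (\<forall>n. C n \<noteq> {}) \<and> (\<forall>e>0. \<forall>\<^sub>F n in sequentially. \<exists>y\<in>C n. \<bar>D y x\<bar> < e)"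
proof
  assume "x \<in> K_liminf D C"
  then obtain xs where xs: "\<forall>n. xs n \<in> C n" "(\<lambda>n. D (xs n) x) \<longlonglongrightarrow> 0"
    unfolding K_liminf_def by auto
  show "(\<forall>n. C n \<noteq> {}) \<and> (\<forall>e>0. \<forall>\<^sub>F n in sequentially. \<exists>y\<in>C n. \<bar>D y x\<bar> < e)"
  proof (intro conjI allI impI)
    fix n show "C n \<noteq> {}" using xs by auto
  next
    fix e :: real assume "e > 0"
    with xs(2) have "\<forall>\<^sub>F n in sequentially. dist (D (xs n) x) 0 < e" by (simp add: tendsto_iff)
    then show "\<forall>\<^sub>F n in sequentially. \<exists>y\<in>C n. \<bar>D y x\<bar> < e"
      by eventually_elim (use xs(1) in auto)
  qed
next
  assume A: "(\<forall>n. C n \<noteq> {}) \<and> (\<forall>e>0. \<forall>\<^sub>F n in sequentially. \<exists>y\<in>C n. \<bar>D y x\<bar> < e)"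
  define g where "g n = Inf ((\<lambda>y. \<bar>D y x\<bar>) ` C n)" for n
  have bdd: "bdd_below ((\<lambda>y. \<bar>D y x\<bar>) ` C n)" for n
    by (rule bdd_belowI[of _ 0]) auto
  have "\<exists>y\<in>C n. \<bar>D y x\<bar> < g n + 1 / (real n + 1)" for n
  proof -
    have "g n < g n + 1 / (real n + 1)" by simp
    then obtain z where "z \<in> (\<lambda>y. \<bar>D y x\<bar>) ` C n" "z < g n + 1 / (real n + 1)"
      using cInf_lessD[of "(\<lambda>y. \<bar>D y x\<bar>) ` C n"] A unfolding g_def by blast
    then show ?thesis by auto
  qed
  then obtain xs where xs: "\<And>n. xs n \<in> C n" "\<And>n. \<bar>D (xs n) x\<bar> < g n + 1 / (real n + 1)"
    by metis
  have "(\<lambda>n. D (xs n) x) \<longlonglongrightarrow> 0"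
    unfolding tendsto_iff
  proof (intro allI impI)
    fix e :: real assume e: "e > 0"
    have ev1: "\<forall>\<^sub>F n in sequentially. \<exists>y\<in>C n. \<bar>D y x\<bar> < e/2" using A e half_gt_zero by blast
    have "\<forall>\<^sub>F n in sequentially. 1 / (real n + 1) < e/2"
    proof -
      have "(\<lambda>n. 1 / (real n + 1)) \<longlonglongrightarrow> 0" using LIMSEQ_inverse_real_of_nat by (simp add: inverse_eq_divide add.commute)
      then have "\<forall>\<^sub>F n in sequentially. dist (1 / (real n + 1)) 0 < e/2" by (rule tendsto_iff[THEN iffD1, rule_format]) (use e in simp)
      then show ?thesis by eventually_elim simp
    qed
    with ev1 show "\<forall>\<^sub>F n in sequentially. dist (D (xs n) x) 0 < e"
    proof eventually_elim
      case (elim n)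
      then obtain y where y: "y \<in> C n" "\<bar>D y x\<bar> < e/2" by auto
      have "g n \<le> \<bar>D y x\<bar>" unfolding g_def by (rule cInf_lower) (use y bdd in auto)
      with xs(2)[of n] y elim show ?case by simp
    qed
  qed
  with xs(1) show "x \<in> K_liminf D C" unfolding K_liminf_def by auto
qed

lemma liminf_sub_limsup: "K_liminf D C \<subseteq> K_limsup D C"
  unfolding K_liminf_def K_limsup_def
  by (auto intro!: exI[of _ id] simp: strict_mono_def)

theorem theorem3p4:
  fixes u :: "'a::metric_space \<Rightarrow> real" and us :: "nat \<Rightarrow> 'a \<Rightarrow> real"
  assumes "F_USC u" and "\<And>n. F_USC (us n)"
  shows "Gamma_conv us u \<longleftrightarrow>
    (\<forall>\<alpha>\<in>{0<..1}.
       closure {x. u x > \<alpha>} \<subseteq> K_liminf dist (\<lambda>n. acut (us n) \<alpha>)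
     \<and> K_liminf dist (\<lambda>n. acut (us n) \<alpha>) \<subseteq> K_limsup dist (\<lambda>n. acut (us n) \<alpha>)
     \<and> K_limsup dist (\<lambda>n. acut (us n) \<alpha>) \<subseteq> acut u \<alpha>)"
proof
  assume G: "Gamma_conv us u"
  then have G1: "endograph u = K_liminf dbar (\<lambda>n. endograph (us n))"
    and G2: "endograph u = K_limsup dbar (\<lambda>n. endograph (us n))"
    unfolding Gamma_conv_def K_conv_def by auto
  show "\<forall>\<alpha>\<in>{0<..1}.
       closure {x. u x > \<alpha>} \<subseteq> K_liminf dist (\<lambda>n. acut (us n) \<alpha>)
     \<and> K_liminf dist (\<lambda>n. acut (us n) \<alpha>) \<subseteq> K_limsup dist (\<lambda>n. acut (us n) \<alpha>)
     \<and> K_limsup dist (\<lambda>n. acut (us n) \<alpha>) \<subseteq> acut u \<alpha>"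
  proof (intro ballI conjI)
    fix \<alpha> :: real assume al: "\<alpha> \<in> {0<..1}"
    show "K_liminf dist (\<lambda>n. acut (us n) \<alpha>) \<subseteq> K_limsup dist (\<lambda>n. acut (us n) \<alpha>)"
      by (rule liminf_sub_limsup)
    show "closure {x. u x > \<alpha>} \<subseteq> K_liminf dist (\<lambda>n. acut (us n) \<alpha>)"
    proof
      fix x assume x: "x \<in> closure {x. u x > \<alpha>}"
      show "x \<in> K_liminf dist (\<lambda>n. acut (us n) \<alpha>)"
        unfolding liminf_char
      proof (intro conjI allI impI)
        fix n show "acut (us n) \<alpha> \<noteq> {}" using assms(2)[of n] al unfolding F_USC_def by auto
      next
        fix e :: real assume e: "e > 0"
        obtain x' where x': "u x' > \<alpha>" "dist x' x < e/2"
          using x e half_gt_zero[of e] unfolding closure_approachable by blast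
        have "(x', u x') \<in> endograph u" using assms(1) al x' unfolding F_USC_def endograph_def by auto
        then have "(x', u x') \<in> K_liminf dbar (\<lambda>n. endograph (us n))" using G1 by simp
        then have "\<forall>\<^sub>F n in sequentially. \<exists>y\<in>endograph (us n). \<bar>dbar y (x', u x')\<bar> < min (e/2) (u x' - \<alpha>)"
        proof -
          have "min (e/2) (u x' - \<alpha>) > 0" using e x' by simp
          then show ?thesis using \<open>(x', u x') \<in> K_liminf dbar (\<lambda>n. endograph (us n))\<close>
            unfolding liminf_char by blast
        qed
        then show "\<forall>\<^sub>F n in sequentially. \<exists>y\<in>acut (us n) \<alpha>. \<bar>dist y x\<bar> < e"
        proof eventually_elim
          case (elim n)
          then obtain y s where ys: "(y, s) \<in> endograph (us n)" "\<bar>dbar (y, s) (x', u x')\<bar> < min (e/2) (u x' - \<alpha>)"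
            by auto
          then have m1: "dist y x' + \<bar>s - u x'\<bar> < e/2" and m2: "dist y x' + \<bar>s - u x'\<bar> < u x' - \<alpha>"
            by (simp_all add: dbar_def)
          have tr: "dist y x \<le> dist y x' + dist x' x" by (rule dist_triangle)
          have us: "us n y \<ge> s" using ys unfolding endograph_def by auto
          have z1: "dist y x' \<ge> 0" by simp
          have z2: "\<bar>s - u x'\<bar> \<ge> 0" by simp
          have z3: "s \<ge> u x' - \<bar>s - u x'\<bar>" by linarith
          have "dist y x < e" using m1 tr z1 z2 x'(2) by linarith
          moreover have "\<alpha> \<le> us n y" using m2 us z1 z3 by linarith
          ultimately have "dist y x < e" "\<alpha> \<le> us n y" by auto
          then show ?case by (intro bexI[of _ y]) (auto simp: acut_def)
        qed
      qed
    qed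
    show "K_limsup dist (\<lambda>n. acut (us n) \<alpha>) \<subseteq> acut u \<alpha>"
    proof
      fix x assume "x \<in> K_limsup dist (\<lambda>n. acut (us n) \<alpha>)"
      then obtain r xs where r: "strict_mono (r :: nat \<Rightarrow> nat)" "\<forall>j. xs j \<in> acut (us (r j)) \<alpha>"
        "(\<lambda>j. dist (xs j) x) \<longlonglongrightarrow> 0" unfolding K_limsup_def by auto
      have "(x, \<alpha>) \<in> K_limsup dbar (\<lambda>n. endograph (us n))"
        unfolding K_limsup_def
        using r al by (intro CollectI exI[of _ r] exI[of _ "\<lambda>j. (xs j, \<alpha>)"])
          (auto simp: dbar_def endograph_def acut_def)
      then have "(x, \<alpha>) \<in> endograph u" using G2 by simp
      then show "x \<in> acut u \<alpha>" by (simp add: endograph_def acut_def)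
    qed
  qed
next
  assume H: "\<forall>\<alpha>\<in>{0<..1}.
       closure {x. u x > \<alpha>} \<subseteq> K_liminf dist (\<lambda>n. acut (us n) \<alpha>)
     \<and> K_liminf dist (\<lambda>n. acut (us n) \<alpha>) \<subseteq> K_limsup dist (\<lambda>n. acut (us n) \<alpha>)
     \<and> K_limsup dist (\<lambda>n. acut (us n) \<alpha>) \<subseteq> acut u \<alpha>"
  have nn: "0 \<le> us n z" for n z using assms(2)[of n] unfolding F_USC_def by blast
  have z0: "(z, 0) \<in> endograph (us n)" for z n using nn[of n z] by (simp add: endograph_def)
  have S1: "endograph u \<subseteq> K_liminf dbar (\<lambda>n. endograph (us n))"
  proof
    fix p assume p: "p \<in> endograph u"
    obtain x t where pt: "p = (x, t)" by fastforce
    have t: "0 \<le> t" "t \<le> 1" "u x \<ge> t" using p pt unfolding endograph_def by auto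
    show "p \<in> K_liminf dbar (\<lambda>n. endograph (us n))"
      unfolding liminf_char pt
    proof (intro conjI allI impI)
      fix n :: nat
      show "endograph (us n) \<noteq> {}" using z0[of x n] by blast
    next
      fix e :: real assume e: "e > 0"
      show "\<forall>\<^sub>F n in sequentially. \<exists>y\<in>endograph (us n). \<bar>dbar y (x, t)\<bar> < e"
      proof (cases "t \<le> e/2")
        case True
        have "(x, 0) \<in> endograph (us n)" for n by (rule z0)
        moreover have "\<bar>dbar (x, 0) (x, t)\<bar> < e" using True t e by (simp add: dbar_def)
        ultimately show ?thesis by (intro always_eventually allI) blast
      next
        case False
        define \<beta> where "\<beta> = t - e/2"
        have b: "\<beta> \<in> {0<..1}" using False t e unfolding \<beta>_def by auto
        have xin: "x \<in> {x. u x > \<beta>}" using t e unfolding \<beta>_def by auto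
        have incl: "closure {x. u x > \<beta>} \<subseteq> K_liminf dist (\<lambda>n. acut (us n) \<beta>)"
          using bspec[OF H b] by (rule conjunct1)
        have "x \<in> closure {x. u x > \<beta>}" using xin by (rule closure_subset[THEN subsetD])
        then have "x \<in> K_liminf dist (\<lambda>n. acut (us n) \<beta>)" by (rule subsetD[OF incl])
        then have "\<forall>e>0. \<forall>\<^sub>F n in sequentially. \<exists>y\<in>acut (us n) \<beta>. \<bar>dist y x\<bar> < e"
          unfolding liminf_char by blast
        then have "\<forall>\<^sub>F n in sequentially. \<exists>y\<in>acut (us n) \<beta>. \<bar>dist y x\<bar> < e/2"
          using half_gt_zero[OF e] by blast
        then show ?thesis
        proof eventually_elim
          case (elim n)
          then obtain y where y: "y \<in> acut (us n) \<beta>" "dist y x < e/2" by auto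
          have "(y, \<beta>) \<in> endograph (us n)" using y b unfolding acut_def endograph_def by auto
          moreover have "\<bar>dbar (y, \<beta>) (x, t)\<bar> < e" using y e unfolding dbar_def \<beta>_def by simp
          ultimately show ?case by blast
        qed
      qed
    qed
  qed
  have S2: "K_limsup dbar (\<lambda>n. endograph (us n)) \<subseteq> endograph u"
  proof
    fix p assume "p \<in> K_limsup dbar (\<lambda>n. endograph (us n))"
    then obtain r ps where r: "strict_mono (r :: nat \<Rightarrow> nat)" "\<forall>j. ps j \<in> endograph (us (r j))"
      "(\<lambda>j. dbar (ps j) p) \<longlonglongrightarrow> 0" unfolding K_limsup_def by auto
    obtain x t where pt: "p = (x, t)" by fastforce
    have d1: "(\<lambda>j. dist (fst (ps j)) x) \<longlonglongrightarrow> 0"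
      by (rule tendsto_sandwich[of "\<lambda>_. 0" _ _ "\<lambda>j. dbar (ps j) p"]) (use r(3) in \<open>auto simp: dbar_def pt\<close>)
    have d2: "(\<lambda>j. \<bar>snd (ps j) - t\<bar>) \<longlonglongrightarrow> 0"
      by (rule tendsto_sandwich[of "\<lambda>_. 0" _ _ "\<lambda>j. dbar (ps j) p"]) (use r(3) in \<open>auto simp: dbar_def pt\<close>)
    have d3: "(\<lambda>j. snd (ps j)) \<longlonglongrightarrow> t"
      using d2 by (simp add: tendsto_rabs_zero_iff LIM_zero_iff)
    have ps01: "snd (ps j) \<in> {0..1}" "us (r j) (fst (ps j)) \<ge> snd (ps j)" for j
      using r(2)[rule_format, of j] unfolding endograph_def by (auto split: prod.splits)
    have t01: "t \<in> {0..1}"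
      by (rule closed_sequentially[OF closed_atLeastAtMost _ d3]) (use ps01 in auto)
    have ge: "u x \<ge> \<beta>" if b: "0 < \<beta>" "\<beta> < t" for \<beta>
    proof -
      have b1: "\<beta> \<in> {0<..1}" using b t01 by auto
      have "\<forall>\<^sub>F j in sequentially. snd (ps j) > \<beta>"
        using d3 b(2) by (rule order_tendstoD)
      then obtain J where J: "\<And>j. j \<ge> J \<Longrightarrow> snd (ps j) > \<beta>" by (auto simp: eventually_sequentially)
      have "x \<in> K_limsup dist (\<lambda>n. acut (us n) \<beta>)"
        unfolding K_limsup_def
      proof (intro CollectI exI conjI allI)
        show "strict_mono (\<lambda>j. r (j + J))" using r(1) by (auto simp: strict_mono_def)
        fix j show "fst (ps (j + J)) \<in> acut (us (r (j + J))) \<beta>"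
          using J[of "j+J"] ps01(2)[of "j+J"] by (auto simp: acut_def)
      next
        show "(\<lambda>j. dist (fst (ps (j + J))) x) \<longlonglongrightarrow> 0"
          using LIMSEQ_ignore_initial_segment[OF d1, of J] by simp
      qed
      moreover have "K_limsup dist (\<lambda>n. acut (us n) \<beta>) \<subseteq> acut u \<beta>"
        using bspec[OF H b1] by simp
      ultimately show ?thesis unfolding acut_def by blast
    qed
    have "u x \<ge> t"
    proof (cases "t = 0")
      case True
      then show ?thesis using assms(1) unfolding F_USC_def by auto
    next
      case False
      with t01 have tp: "t > 0" by auto
      show ?thesis by (rule dense_le_bounded[OF tp]) (rule ge)
    qed
    then show "p \<in> endograph u" using pt t01 unfolding endograph_def by auto
  qed
  show "Gamma_conv us u"
    unfolding Gamma_conv_def K_conv_def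
    using S1 S2 liminf_sub_limsup[of dbar "\<lambda>n. endograph (us n)"] by blast
qed

end
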